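(* Let $\mathcal{A}$ be a ring with identity $1$ and let $a,b,d\in\mathcal{A}$. The following statements are equivalent: (i) $b$ is the Mary (natural) inverse of $a$ along $d$, i.e. $bab=b$, $b\mathcal{A}=d\mathcal{A}$ and $\mathcal{A}b=\mathcal{A}d$; (ii) $b$ is an outer inverse of $a$ (i.e. $bab=b$), $d$ is inner regular, and there exists a reflexive inverse $t\in\mathcal{A}$ of $d$ (i.e. $dtd=d$ and $tdt=t$) such that $ba=dt$ and $ab=td$.
   Context: For $x,y$ in a ring $\mathcal{A}$ with identity, $x\mathcal{A}\subset y\mathcal{A}$ means there exists $z\in\mathcal{A}$ with $x=yz$, and $x\mathcal{A}=y\mathcal{A}$ means both inclusions hold; similarly $\mathcal{A}x\subset\mathcal{A}y$ means $x=zy$ for some $z\in\mathcal{A}$. An element $d$ is inner regular if there is $t\in\mathcal{A}$ with $dtd=d$. An element $b$ satisfying $bab=b$, $b\mathcal{A}=d\mathcal{A}$, $\mathcal{A}b=\mathcal{A}d$ is called the Mary (natural) inverse of $a$ along $d$; it is unique when it exists. *)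

theory Defs
  imports Main
begin

definition right_ideal_le :: "'a::ring_1 \<Rightarrow> 'a \<Rightarrow> bool" where
  "right_ideal_le x y \<longleftrightarrow> (\<exists>z. x = y * z)"

definition left_ideal_le :: "'a::ring_1 \<Rightarrow> 'a \<Rightarrow> bool" where
  "left_ideal_le x y \<longleftrightarrow> (\<exists>z. x = z * y)"

definition right_ideal_eq :: "'a::ring_1 \<Rightarrow> 'a \<Rightarrow> bool" where
  "right_ideal_eq x y \<longleftrightarrow> right_ideal_le x y \<and> right_ideal_le y x"

definition left_ideal_eq :: "'a::ring_1 \<Rightarrow> 'a \<Rightarrow> bool" where
  "left_ideal_eq x y \<longleftrightarrow> left_ideal_le x y \<and> left_ideal_le y x"

definition inner_regular :: "'a::ring_1 \<Rightarrow> bool" where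
  "inner_regular d \<longleftrightarrow> (\<exists>t. d * t * d = d)"

definition mary_inverse_along :: "'a::ring_1 \<Rightarrow> 'a \<Rightarrow> 'a \<Rightarrow> bool" where
  "mary_inverse_along b a d \<longleftrightarrow>
     b * a * b = b \<and> right_ideal_eq b d \<and> left_ideal_eq b d"

end

theory Submission
  imports Defs
begin

theorem theorem2p3:
  fixes a b d :: "'a::ring_1"
  shows "mary_inverse_along b a d \<longleftrightarrow>
    (b * a * b = b \<and> inner_regular d \<and>
     (\<exists>t. d * t * d = d \<and> t * d * t = t \<and> b * a = d * t \<and> a * b = t * d))"
proof
  assume H: "mary_inverse_along b a d"
  then have bab: "b * a * b = b" by (simp add: mary_inverse_along_def)
  from H have "(\<exists>x. b = d * x) \<and> (\<exists>y. d = b * y) \<and> (\<exists>z. b = z * d) \<and> (\<exists>w. d = w * b)"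
    unfolding mary_inverse_along_def right_ideal_eq_def left_ideal_eq_def right_ideal_le_def left_ideal_le_def
    by (elim conjE) (intro conjI; assumption)
  then obtain x y z w where bx: "b = d * x" and dy: "d = b * y" and bz: "b = z * d" and dw: "d = w * b"
    by (elim conjE exE)
  have bad: "b * a * d = d"
  proof -
    have "b * a * d = (b * a * b) * y" by (simp only: dy mult.assoc)
    then show ?thesis by (simp only: bab dy[symmetric])
  qed
  have dab: "d * a * b = d"
  proof -
    have "d * a * b = w * (b * a * b)" by (simp only: dw mult.assoc)
    then show ?thesis by (simp only: bab dw[symmetric])
  qed
  define t where "t = a * z * d * x * a"
  have t2: "t = a * b * x * a" by (simp add: t_def bz mult.assoc)
  have dt: "d * t = b * a"
  proof -
    have "d * t = (d * a * b) * x * a" by (simp add: t2 mult.assoc)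
    also have "\<dots> = d * x * a" by (simp only: dab)
    also have "\<dots> = b * a" by (simp only: bx)
    finally show ?thesis .
  qed
  have td: "t * d = a * b"
  proof -
    have "t * d = a * z * (d * x * a * d)" by (simp add: t_def mult.assoc)
    also have "d * x * a * d = d" using bad bx by simp
    finally show ?thesis by (simp add: bz mult.assoc)
  qed
  have dtd: "d * t * d = d" using dt bad by simp
  have tdt: "t * d * t = t"
  proof -
    have "t * d * t = a * b * t" by (simp only: td)
    also have "\<dots> = a * (b * a * b) * x * a" by (simp only: t2 mult.assoc)
    finally have "t * d * t = a * (b * a * b) * x * a" .
    then show ?thesis by (simp add: bab t2)
  qed
  show "b * a * b = b \<and> inner_regular d \<and>
     (\<exists>t. d * t * d = d \<and> t * d * t = t \<and> b * a = d * t \<and> a * b = t * d)"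
    unfolding inner_regular_def using bab dtd tdt dt td by metis
next
  assume "b * a * b = b \<and> inner_regular d \<and>
     (\<exists>t. d * t * d = d \<and> t * d * t = t \<and> b * a = d * t \<and> a * b = t * d)"
  then obtain t where bab: "b * a * b = b" and dtd: "d * t * d = d" and ba: "b * a = d * t" and ab: "a * b = t * d"
    by blast
  have r1: "b = d * (t * b)" using bab ba by (simp add: mult.assoc[symmetric])
  have r2: "d = b * (a * d)" using dtd ba by (simp add: mult.assoc[symmetric])
  have l1: "b = (b * t) * d" proof -
    have "(b * t) * d = b * (a * b)" by (simp only: ab mult.assoc)
    then show ?thesis by (simp only: bab mult.assoc[symmetric])
  qed
  have l2: "d = (d * a) * b" proof -
    have "(d * a) * b = d * (t * d)" by (simp only: ab mult.assoc)
    then show ?thesis by (simp only: dtd mult.assoc[symmetric])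
  qed
  show "mary_inverse_along b a d"
    unfolding mary_inverse_along_def right_ideal_eq_def left_ideal_eq_def right_ideal_le_def left_ideal_le_def
    using bab r1 r2 l1 l2 by blast
qed

end
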